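(* For every integer $n\ge1$, $$D_n = D_{2^{|n|+1}}-\omega_n D_{2^{m(n)}}+\sum_{i=0}^{|n|-1}d_{n,i}.$$ Consequently, for every $f\in L^1(\mathbb{I})$, $$S_n f =\mathbb{E}_{|n|+1}f-\omega_n\,\mathbb{E}_{m(n)}(f\omega_n)+\sum_{i=0}^{|n|-1} f*d_{n,i}.$$
   Context: $\mathbb{I}=[0,1)$; $x=\sum_{j\ge0}x_j2^{-j-1}$ ($x_j\in\{0,1\}$, terminating expansion for dyadic rationals), $n=\sum_{j\ge0}n_j2^j$. Dyadic addition: $x\dotplus y=\sum_{j\ge0}|x_j-y_j|2^{-j-1}$. Walsh–Paley functions $\omega_n(x)=\prod_{j\ge0}(-1)^{x_jn_j}$. Dirichlet kernel $D_n=\sum_{k=0}^{n-1}\omega_k$; partial sums $S_nf(y)=\sum_{k=0}^{n-1}\widehat f(k)\omega_k(y)=\int_{\mathbb{I}}f(x\dotplus y)D_n(x)\,dx$ with $\widehat f(k)=\int f\omega_k$. Dyadic convolution $(f*g)(y)=\int_{\mathbb{I}}f(x\dotplus y)g(x)\,dx$. $\mathcal{A}_m$ is the $\sigma$-algebra generated by dyadic intervals $\{y:y_0=x_0,\dots,y_{m-1}=x_{m-1}\}$ of rank $m$, and $\mathbb{E}_m$ the conditional expectation with respect to $\mathcal{A}_m$. For $n\ge1$: $|n|=\max\{j:n_j\neq0\}$, $m(n)=\min\{j:n_j=1\}$. For $0\le i<|n|$: $\lambda_{n,i}=1$ if $m(n)\le i<|n|$ and $n_i=0$, and $\lambda_{n,i}=0$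 otherwise; $d_{n,i}=\lambda_{n,i}\,\omega_n\,(D_{2^i}-D_{2^{i+1}})$. *)

theory Defs
  imports "HOL-Analysis.Analysis"
begin

text \<open>Binary digits of x in [0,1): x = sum_j x_j 2^(-j-1), terminating expansion
  for dyadic rationals.\<close>
definition digit :: "real \<Rightarrow> nat \<Rightarrow> nat" where
  "digit x j = nat \<lfloor>2 ^ (j + 1) * x\<rfloor> mod 2"

definition nbit :: "nat \<Rightarrow> nat \<Rightarrow> nat" where
  "nbit n j = n div 2 ^ j mod 2"

definition dplus :: "real \<Rightarrow> real \<Rightarrow> real" where
  "dplus x y = (\<Sum>j. (if digit x j = digit y j then 0 else 1) / 2 ^ (j + 1))"

text \<open>Walsh-Paley functions (bits of n vanish from index n on, since n < 2^n).\<close>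
definition walsh :: "nat \<Rightarrow> real \<Rightarrow> real" where
  "walsh n x = (\<Prod>j<n. (-1) ^ (digit x j * nbit n j))"

definition dirichlet :: "nat \<Rightarrow> real \<Rightarrow> real" where
  "dirichlet n x = (\<Sum>k<n. walsh k x)"

definition walsh_coeff :: "(real \<Rightarrow> real) \<Rightarrow> nat \<Rightarrow> real" where
  "walsh_coeff f k = (LINT x:{0..<1}|lborel. f x * walsh k x)"

definition partial_sum :: "nat \<Rightarrow> (real \<Rightarrow> real) \<Rightarrow> real \<Rightarrow> real" where
  "partial_sum n f y = (\<Sum>k<n. walsh_coeff f k * walsh k y)"

definition dconv :: "(real \<Rightarrow> real) \<Rightarrow> (real \<Rightarrow> real) \<Rightarrow> real \<Rightarrow> real" where
  "dconv f g y = (LINT x:{0..<1}|lborel. f (dplus x y) * g x)"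

definition dyad_int :: "nat \<Rightarrow> real \<Rightarrow> real set" where
  "dyad_int m y = {x \<in> {0..<1}. \<forall>j<m. digit x j = digit y j}"

text \<open>Conditional expectation with respect to A_m (finite sigma-algebra generated by
  the 2^m dyadic intervals of rank m, each of Lebesgue measure 2^(-m)): the average of f
  over the atom containing y.\<close>
definition cond_exp_dyad :: "nat \<Rightarrow> (real \<Rightarrow> real) \<Rightarrow> real \<Rightarrow> real" where
  "cond_exp_dyad m f y = 2 ^ m * (LINT x:dyad_int m y|lborel. f x)"

text \<open>|n| and m(n).\<close>
definition top_bit :: "nat \<Rightarrow> nat" where
  "top_bit n = (GREATEST j. nbit n j \<noteq> 0)"

definition low_bit :: "nat \<Rightarrow> nat" where
  "low_bit n = (LEAST j. nbit n j = 1)"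

definition lam :: "nat \<Rightarrow> nat \<Rightarrow> real" where
  "lam n i = (if low_bit n \<le> i \<and> i < top_bit n \<and> nbit n i = 0 then 1 else 0)"

definition dker :: "nat \<Rightarrow> nat \<Rightarrow> real \<Rightarrow> real" where
  "dker n i x = lam n i * walsh n x * (dirichlet (2 ^ i) x - dirichlet (2 ^ (i + 1)) x)"

end

theory Submission
  imports Defs
begin
abbreviation "I01 \<equiv> {0..<1::real}"

lemma digit_lt2: "digit x j < 2" by (simp add: digit_def)
lemma digit_01: "digit x j = 0 \<or> digit x j = 1" using digit_lt2[of x j] by linarith
lemma digit_le1: "digit x j \<le> 1" using digit_lt2[of x j] by linarith

lemma floor_step:
  assumes "x \<ge> 0"
  shows "nat \<lfloor>2 ^ (j + 1) * x\<rfloor> = 2 * nat \<lfloor>2 ^ j * x\<rfloor> + digit x j"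
proof -
  define z where "z = 2 ^ j * x"
  have z0: "z \<ge> 0" using assms by (simp add: z_def)
  have e: "2 ^ (j + 1) * x = 2 * z" by (simp add: z_def)
  have a: "\<lfloor>2 * z\<rfloor> \<le> 2 * \<lfloor>z\<rfloor> + 1"
    using floor_less_iff[of "2*z" "2 * \<lfloor>z\<rfloor> + 2"] real_of_int_floor_add_one_gt[of z] by linarith
  have b: "2 * \<lfloor>z\<rfloor> \<le> \<lfloor>2 * z\<rfloor>"
    using le_floor_iff[of "2 * \<lfloor>z\<rfloor>" "2*z"] of_int_floor_le[of z] by linarith
  have fz: "\<lfloor>z\<rfloor> \<ge> 0" using z0 by simp
  define d where "d = \<lfloor>2 * z\<rfloor> - 2 * \<lfloor>z\<rfloor>"
  have d: "\<lfloor>2 * z\<rfloor> = 2 * \<lfloor>z\<rfloor> + d" "d = 0 \<or> d = 1" using a b unfolding d_def by linarith+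
  have "nat \<lfloor>2 * z\<rfloor> = 2 * nat \<lfloor>z\<rfloor> + nat d" using d fz by (auto simp: nat_add_distrib nat_mult_distrib)
  moreover have "nat \<lfloor>2 * z\<rfloor> mod 2 = nat d" unfolding calculation using d by auto
  ultimately show ?thesis unfolding digit_def e z_def[symmetric] by simp
qed

lemma floor0: "x \<in> I01 \<Longrightarrow> nat \<lfloor>x\<rfloor> = 0"
  by (simp add: floor_eq_iff)

lemma two_add_eq: "d < 2 \<Longrightarrow> e < 2 \<Longrightarrow> (2*a + d = 2*b + (e::nat)) \<longleftrightarrow> (a = b \<and> d = e)"
  by presburger

lemma prefix_iff:
  assumes "x \<in> I01" "y \<in> I01"
  shows "(\<forall>i<j. digit x i = digit y i) \<longleftrightarrow> nat \<lfloor>2^j*x\<rfloor> = nat \<lfloor>2^j*y\<rfloor>"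
proof (induction j)
  case 0
  then show ?case using floor0[OF assms(1)] floor0[OF assms(2)] by simp
next
  case (Suc j)
  have "(\<forall>i<Suc j. digit x i = digit y i) \<longleftrightarrow> (\<forall>i<j. digit x i = digit y i) \<and> digit x j = digit y j"
    using less_Suc_eq by auto
  also have "\<dots> \<longleftrightarrow> nat \<lfloor>2^j*x\<rfloor> = nat \<lfloor>2^j*y\<rfloor> \<and> digit x j = digit y j" using Suc by simp
  also have "\<dots> \<longleftrightarrow> 2 * nat \<lfloor>2 ^ j * x\<rfloor> + digit x j = 2 * nat \<lfloor>2 ^ j * y\<rfloor> + digit y j"
    using two_add_eq[OF digit_lt2[of x j] digit_lt2[of y j], of "nat \<lfloor>2^j*x\<rfloor>" "nat \<lfloor>2^j*y\<rfloor>"] by blast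
  also have "\<dots> \<longleftrightarrow> nat \<lfloor>2^Suc j*x\<rfloor> = nat \<lfloor>2^Suc j*y\<rfloor>"
    using floor_step[of x j] floor_step[of y j] assms by (simp del: power_Suc)
  finally show ?case .
qed

lemma floor_lt: "x \<in> I01 \<Longrightarrow> nat \<lfloor>2^j*x\<rfloor> < 2^j"
proof -
  assume x: "x \<in> I01"
  have "2^j * x < 2^j" using x by simp
  then have "\<lfloor>2^j*x\<rfloor> < int (2^j)" by (metis floor_less_iff of_int_of_nat_eq of_nat_numeral of_nat_power)
  then show ?thesis using x by (subst nat_less_iff) auto
qed

lemma cyl_interval:
  assumes "K < (2::nat)^j"
  shows "{x\<in>I01. nat \<lfloor>2^j*x\<rfloor> = K} = {real K/2^j..<(real K+1)/2^j}"
proof -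
  have "K + 1 \<le> 2^j" using assms by simp
  then have "real (K + 1) \<le> real (2^j)" by (simp only: of_nat_le_iff)
  then have K1: "real K + 1 \<le> 2^j" by simp
  have iff0: "nat \<lfloor>2^j*x\<rfloor> = K \<longleftrightarrow> real K \<le> 2^j*x \<and> 2^j*x < real K + 1" if "x \<ge> 0" for x
  proof -
    have "nat \<lfloor>2^j*x\<rfloor> = K \<longleftrightarrow> \<lfloor>2^j*x\<rfloor> = int K"
      using nat_eq_iff2[of K "\<lfloor>2^j*x\<rfloor>"] that by (auto simp: zero_le_mult_iff)
    also have "\<dots> \<longleftrightarrow> real K \<le> 2^j*x \<and> 2^j*x < real K + 1"
      by (simp add: floor_eq_iff)
    finally show ?thesis .
  qed
  have a1: "real K \<le> 2^j*x \<longleftrightarrow> real K/2^j \<le> x" for x by (simp add: field_simps)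
  have a2: "2^j*x < real K + 1 \<longleftrightarrow> x < (real K+1)/2^j" for x by (simp add: field_simps)
  have iff: "nat \<lfloor>2^j*x\<rfloor> = K \<longleftrightarrow> real K/2^j \<le> x \<and> x < (real K+1)/2^j" if "x \<ge> 0" for x
    using iff0[OF that] a1 a2 by simp
  have K2: "(real K+1)/2^j \<le> 1" using K1 by simp
  have K3: "0 \<le> real K/2^j" by simp
  show ?thesis
  proof (intro set_eqI iffI)
    fix x assume "x \<in> {x\<in>I01. nat \<lfloor>2^j*x\<rfloor> = K}"
    then have x0: "0 \<le> x" "nat \<lfloor>2^j*x\<rfloor> = K" by auto
    then show "x \<in> {real K/2^j..<(real K+1)/2^j}" using iff[OF x0(1)] by simp
  next
    fix x assume x: "x \<in> {real K/2^j..<(real K+1)/2^j}"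
    then have xx: "real K/2^j \<le> x" "x < (real K+1)/2^j" by auto
    then have x0: "0 \<le> x" "x < 1" using K2 K3 by linarith+
    then show "x \<in> {x\<in>I01. nat \<lfloor>2^j*x\<rfloor> = K}" using iff[OF x0(1)] x by simp
  qed
qed

lemma dyad_int_eq: "y \<in> I01 \<Longrightarrow> dyad_int j y = {x\<in>I01. nat \<lfloor>2^j*x\<rfloor> = nat \<lfloor>2^j*y\<rfloor>}"
  unfolding dyad_int_def using prefix_iff by auto

lemma pow_small: "(e::real) > 0 \<Longrightarrow> \<exists>n. 1 / 2^n < e"
proof -
  assume e: "e > 0"
  obtain n where n: "1/e < real n" using reals_Archimedean2 by blast
  have "real n < 2^n" by (metis of_nat_less_iff of_nat_numeral of_nat_power less_exp)
  then have "1/e < 2^n" using n by linarith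
  then have "1/2^n < e" using e by (simp add: field_simps)
  then show ?thesis by blast
qed

lemma floor_all_eq:
  assumes "a \<in> I01" "b \<in> I01" "\<And>j. nat \<lfloor>2^j*a\<rfloor> = nat \<lfloor>2^j*b\<rfloor>"
  shows "a = b"
proof (rule ccontr)
  assume "a \<noteq> b"
  then obtain n where n: "1/2^n < \<bar>a - b\<bar>" using pow_small[of "\<bar>a-b\<bar>"] by auto
  have "\<lfloor>2^n*a\<rfloor> = \<lfloor>2^n*b\<rfloor>" using assms(3)[of n] assms(1,2) eq_nat_nat_iff by simp
  then have "\<bar>2^n*a - 2^n*b\<bar> < 1" by linarith
  then have "2^n * \<bar>a - b\<bar> < 1" by (simp add: abs_mult right_diff_distrib[symmetric])
  then show False using n by (simp add: field_simps)
qed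

definition val :: "(nat \<Rightarrow> nat) \<Rightarrow> real" where
  "val c = (\<Sum>j. real (c j) / 2 ^ (j + 1))"

fun pre :: "(nat \<Rightarrow> nat) \<Rightarrow> nat \<Rightarrow> nat" where
  "pre c 0 = 0"
| "pre c (Suc j) = 2 * pre c j + c j"

lemma val_partial: "(\<Sum>i<j. real (c i) / 2 ^ (i + 1)) = real (pre c j) / 2 ^ j"
  by (induction j) (auto simp: field_simps)

lemma summable_val:
  assumes "\<And>i. c i \<le> 1"
  shows "summable (\<lambda>j. real (c j) / 2 ^ (j + 1))"
proof (rule summable_comparison_test')
  show "summable (\<lambda>n. (1/2::real)^Suc n)" using power_half_series summable_def by blast
  fix n show "norm (real (c n) / 2 ^ (n + 1)) \<le> (1/2)^Suc n"
    using assms[of n] by (simp add: field_simps power_divide)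
qed

lemma val_props:
  assumes c1: "\<And>i. c i \<le> 1" and nev: "\<And>N. \<exists>i\<ge>N. c i = 0"
  shows "nat \<lfloor>2^j * val c\<rfloor> = pre c j" "val c \<in> I01" "digit (val c) j = c j"
proof -
  have fl: "nat \<lfloor>2^j * val c\<rfloor> = pre c j" for j
  proof -
    let ?f = "\<lambda>i. real (c i) / 2 ^ (i + 1)"
    have sm: "summable ?f" using summable_val c1 by blast
    have v: "val c = (\<Sum>i. ?f (i + j)) + real (pre c j) / 2 ^ j"
      unfolding val_def using suminf_split_initial_segment[OF sm, of j] val_partial by simp
    define s where "s = (\<Sum>i. real (c (i + j)) / 2 ^ (i + 1))"
    have sms: "summable (\<lambda>i. real (c (i + j)) / 2 ^ (i + 1))" using summable_val[of "\<lambda>i. c (i + j)"] c1 by auto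
    have t: "(\<Sum>i. ?f (i + j)) = s / 2^j"
    proof -
      have "(\<lambda>i. ?f (i + j)) = (\<lambda>i. real (c (i + j)) / 2 ^ (i + 1) * (1/2^j))"
        by (auto simp: power_add field_simps)
      then show ?thesis unfolding s_def using suminf_mult2[OF sms, of "1/2^j"] by simp
    qed
    have s0: "s \<ge> 0" unfolding s_def by (intro suminf_nonneg sms) auto
    have s1: "s < 1"
    proof -
      obtain i where i: "i \<ge> j" "c i = 0" using nev by blast
      let ?g = "\<lambda>n. (1/2::real)^Suc n - real (c (n + j)) / 2 ^ (n + 1)"
      have sh: "summable (\<lambda>n. (1/2::real)^Suc n)" using power_half_series summable_def by blast
      have sg: "summable ?g" by (rule summable_diff[OF sh sms])
      have "0 < suminf ?g"
      proof (rule suminf_pos2[OF sg, of "i - j"])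
        fix n show "0 \<le> ?g n" using c1[of "n+j"] by (simp add: field_simps power_divide)
      next
        show "0 < ?g (i - j)" using i by simp
      qed
      moreover have "suminf ?g = 1 - s" unfolding s_def
        using suminf_diff[OF _ sms, of "\<lambda>n. (1/2::real)^Suc n"] sums_unique[OF power_half_series]
          power_half_series summable_def by force
      ultimately show ?thesis by simp
    qed
    have "2^j * val c = real (pre c j) + s" using v t by (simp add: field_simps)
    then have "\<lfloor>2^j * val c\<rfloor> = int (pre c j)" using s0 s1 by (simp add: floor_eq_iff)
    then show ?thesis by simp
  qed
  show "nat \<lfloor>2^j * val c\<rfloor> = pre c j" by (rule fl)
  have v0: "val c \<ge> 0" unfolding val_def by (intro suminf_nonneg summable_val c1) auto
  have "nat \<lfloor>val c\<rfloor> = 0" using fl[of 0] by simp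
  then have "\<lfloor>val c\<rfloor> \<le> 0" by simp
  then have "val c < 1" by (simp add: floor_le_zero)
  then show "val c \<in> I01" using v0 by simp
  have "digit (val c) j = nat \<lfloor>2^(j+1) * val c\<rfloor> mod 2" by (simp add: digit_def)
  also have "\<dots> = c j" using fl[of "j+1"] c1[of j] by simp
  finally show "digit (val c) j = c j" .
qed

lemma pre_digit: "x \<in> I01 \<Longrightarrow> pre (digit x) j = nat \<lfloor>2^j*x\<rfloor>"
  by (induction j) (auto simp: floor0 floor_step[symmetric] mult.assoc)

lemma digit_not_ev1:
  assumes x: "x \<in> I01" shows "\<exists>i\<ge>N. digit x i = 0"
proof (rule ccontr)
  assume "\<not> ?thesis"
  then have one: "digit x i = 1" if "i \<ge> N" for i using that digit_01 by blast
  define F where "F = nat \<lfloor>2^N*x\<rfloor>"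
  have Fk: "nat \<lfloor>2^(N+k)*x\<rfloor> + 1 = 2^k * (F + 1)" for k
  proof (induction k)
    case 0 then show ?case by (simp add: F_def)
  next
    case (Suc k)
    have "nat \<lfloor>2^(N+Suc k)*x\<rfloor> = 2 * nat \<lfloor>2^(N+k)*x\<rfloor> + digit x (N+k)"
      using floor_step[of x "N+k"] x by simp
    also have "\<dots> + 1 = 2 * (nat \<lfloor>2^(N+k)*x\<rfloor> + 1)" using one[of "N+k"] by simp
    also have "\<dots> = 2^Suc k * (F + 1)" using Suc by simp
    finally show ?case .
  qed
  have x0: "x \<ge> 0" using x by simp
  have Fx: "2^N*x < real F + 1" unfolding F_def using x0 real_of_int_floor_add_one_gt[of "2^N*x"] by simp
  obtain k where k: "1/2^k < real F + 1 - 2^N*x" using pow_small Fx by (metis diff_gt_0_iff_gt)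
  have "real (nat \<lfloor>2^(N+k)*x\<rfloor>) \<le> 2^(N+k)*x" using x0 by simp
  moreover have "real (nat \<lfloor>2^(N+k)*x\<rfloor>) = 2^k * (real F + 1) - 1"
    using arg_cong[OF Fk[of k], of real] by (simp add: algebra_simps)
  ultimately have "2^k * (real F + 1) - 1 \<le> 2^k * (2^N * x)" by (simp add: power_add algebra_simps)
  then have "real F + 1 - 1/2^k \<le> 2^N * x" by (simp add: field_simps)
  then show False using k by simp
qed

lemma val_digit: "x \<in> I01 \<Longrightarrow> val (digit x) = x"
  apply (rule floor_all_eq)
  using val_props[of "digit x"] digit_le1 digit_not_ev1 pre_digit by auto


lemma nbit_high: "k < 2^N \<Longrightarrow> N \<le> j \<Longrightarrow> nbit k j = 0"
proof -
  assume "k < 2^N" "N \<le> j"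
  then have "k < 2^j" by (meson less_le_trans one_less_numeral_iff power_increasing semiring_norm(76) less_imp_le)
  then show ?thesis by (simp add: nbit_def)
qed

lemma walsh_N:
  assumes "k < 2^N"
  shows "walsh k x = (\<Prod>j<N. (-1) ^ (digit x j * nbit k j))"
proof -
  let ?g = "\<lambda>j. (-1::real) ^ (digit x j * nbit k j)"
  have z: "?g j = 1" if "min k N \<le> j" for j
  proof -
    have "k < 2^min k N" using assms less_exp[of k] by (cases "k \<le> N") (auto simp: min_def)
    then show ?thesis using nbit_high[of k "min k N" j] that by simp
  qed
  have a: "prod ?g {..<min k N} = prod ?g {..<k}"
    by (rule prod.mono_neutral_left) (auto intro: z)
  have b: "prod ?g {..<min k N} = prod ?g {..<N}"
    by (rule prod.mono_neutral_left) (auto intro: z)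
  show ?thesis unfolding walsh_def using a b by simp
qed

lemma nbit_add_low:
  assumes "k < 2^t" "j < t"
  shows "nbit (2^t + k) j = nbit k j"
proof -
  have e: "(2::nat)^t = 2^(t-j) * 2^j" using assms(2) by (simp add: power_add[symmetric])
  have "(2^t + k) div 2^j = 2^(t-j) + k div 2^j"
    unfolding e by (simp add: add.commute)
  moreover have "(2::nat)^(t-j) = 2 * 2^(t-j-1)"
  proof -
    have tj: "t - j = Suc (t - j - 1)" using assms(2) by simp
    show ?thesis by (subst tj) simp
  qed
  ultimately show ?thesis unfolding nbit_def by simp
qed

lemma nbit_add_top: "k < 2^t \<Longrightarrow> nbit (2^t + k) t = 1"
  by (simp add: nbit_def)

lemma walsh0: "walsh 0 x = 1" by (simp add: walsh_def)

lemma walsh_add_high: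
  assumes "k < 2^t"
  shows "walsh (2^t + k) x = (-1) ^ (digit x t) * walsh k x"
proof -
  have k1: "k < 2^Suc t" "2^t + k < 2^Suc t" using assms by auto
  have "walsh (2^t + k) x = (\<Prod>j<Suc t. (-1) ^ (digit x j * nbit (2^t+k) j))"
    using walsh_N[OF k1(2)] .
  also have "\<dots> = (\<Prod>j<t. (-1) ^ (digit x j * nbit (2^t+k) j)) * (-1) ^ (digit x t)"
    using nbit_add_top[OF assms] by simp
  also have "(\<Prod>j<t. (-1::real) ^ (digit x j * nbit (2^t+k) j)) = walsh k x"
    using walsh_N[OF assms] nbit_add_low[OF assms] by simp
  finally show ?thesis by simp
qed

lemma dirichlet_Suc: "dirichlet (Suc n) x = dirichlet n x + walsh n x"
  by (simp add: dirichlet_def)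

lemma dirichlet_add_high:
  assumes "k \<le> 2^t"
  shows "dirichlet (2^t + k) x = dirichlet (2^t) x + (-1) ^ (digit x t) * dirichlet k x"
  using assms
proof (induction k)
  case 0 then show ?case by (simp add: dirichlet_def)
next
  case (Suc k)
  then have "k < 2^t" by simp
  then show ?case using Suc walsh_add_high[of k t x]
    by (simp add: dirichlet_Suc algebra_simps)
qed

lemma dirichlet_pow:
  "dirichlet (2^a) x = (if \<forall>j<a. digit x j = 0 then 2^a else 0)"
proof (induction a)
  case 0 then show ?case by (simp add: dirichlet_def walsh0)
next
  case (Suc a)
  have "dirichlet (2^Suc a) x = dirichlet (2^a) x + (-1) ^ (digit x a) * dirichlet (2^a) x"
    using dirichlet_add_high[of "2^a" a x] by (simp add: mult_2)
  also have "\<dots> = dirichlet (2^a) x * (1 + (-1) ^ digit x a)" by (simp add: algebra_simps)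
  finally have e: "dirichlet (2^Suc a) x = dirichlet (2^a) x * (1 + (-1) ^ digit x a)" .
  have all: "(\<forall>j<Suc a. digit x j = 0) \<longleftrightarrow> (\<forall>j<a. digit x j = 0) \<and> digit x a = 0"
    using less_Suc_eq by auto
  show ?case
  proof (cases "digit x a = 0")
    case True then show ?thesis using e Suc all by simp
  next
    case False then have "digit x a = 1" using digit_01[of x a] by simp
    then show ?thesis using e all by simp
  qed
qed

lemma walsh_one: "k < 2^a \<Longrightarrow> \<forall>j<a. digit x j = 0 \<Longrightarrow> walsh k x = 1"
  using walsh_N[of k a x] by simp

lemma decomp: "n \<ge> 1 \<Longrightarrow> \<exists>t k. n = 2^t + k \<and> k < (2::nat)^t"
proof -
  assume "n \<ge> 1"
  then obtain t where "2^t \<le> n" "n < 2^(t+1)" using ex_power_ivl1[of 2 n] by auto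
  then show ?thesis by (intro exI[of _ t] exI[of _ "n - 2^t"]) auto
qed

lemma top_bit_eq: "k < 2^t \<Longrightarrow> top_bit (2^t + k) = t"
  unfolding top_bit_def
proof (rule Greatest_equality)
  assume k: "k < 2^t"
  show "nbit (2 ^ t + k) t \<noteq> 0" using nbit_add_top[OF k] by simp
  fix y assume y: "nbit (2 ^ t + k) y \<noteq> 0"
  show "y \<le> t"
  proof (rule ccontr)
    assume "\<not> y \<le> t"
    then have "Suc t \<le> y" by simp
    moreover have "2^t + k < 2^Suc t" using k by simp
    ultimately show False using nbit_high[of "2^t+k" "Suc t" y] y by simp
  qed
qed

lemma low_bit_props: "n \<ge> 1 \<Longrightarrow> nbit n (low_bit n) = 1 \<and> (\<forall>j<low_bit n. nbit n j \<noteq> 1) \<and> low_bit n \<le> top_bit n"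
proof -
  assume "n \<ge> 1"
  then obtain t k where n: "n = 2^t + k" "k < 2^t" using decomp by blast
  have ex: "nbit n t = 1" using n nbit_add_top by simp
  have L1: "nbit n (low_bit n) = 1" unfolding low_bit_def by (rule LeastI[of _ t]) (rule ex)
  have L2: "\<forall>j<low_bit n. nbit n j \<noteq> 1" unfolding low_bit_def using not_less_Least by blast
  have L3: "low_bit n \<le> t" unfolding low_bit_def by (rule Least_le) (rule ex)
  have L4: "top_bit n = t" using top_bit_eq[OF n(2)] n(1) by simp
  show ?thesis using L1 L2 L3 L4 by simp
qed

lemma low_bit_pow: "low_bit (2^t) = t"
  unfolding low_bit_def
proof (rule Least_equality)
  show "nbit (2 ^ t) t = 1" using nbit_add_top[of 0 t] by simp
  fix y assume y: "nbit (2 ^ t) y = 1"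
  show "t \<le> y"
  proof (rule ccontr)
    assume "\<not> t \<le> y"
    then have "nbit (2^t + 0) y = nbit 0 y" using nbit_add_low[of 0 t y] by simp
    then show False using y by (simp add: nbit_def)
  qed
qed

lemma low_bit_add: "0 < k \<Longrightarrow> k < 2^t \<Longrightarrow> low_bit (2^t + k) = low_bit k"
proof -
  assume k0: "0 < k" and k: "k < 2^t"
  obtain t' k' where kk: "k = 2^t' + k'" "k' < 2^t'" using decomp[of k] k0 by auto
  have tt: "t' < t"
  proof (rule ccontr)
    assume "\<not> t' < t" then have "(2::nat)^t \<le> 2^t'" by simp
    then show False using k kk by linarith
  qed
  have lp: "nbit k (low_bit k) = 1" "\<forall>j<low_bit k. nbit k j \<noteq> 1" "low_bit k \<le> top_bit k"
    using low_bit_props[of k] k0 by auto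
  have lt: "low_bit k < t" using lp(3) top_bit_eq[OF kk(2)] kk(1) tt by simp
  show ?thesis unfolding low_bit_def[of "2^t+k"]
  proof (rule Least_equality)
    show "nbit (2 ^ t + k) (low_bit k) = 1" using nbit_add_low[OF k lt] lp(1) by simp
    fix y assume y: "nbit (2 ^ t + k) y = 1"
    show "low_bit k \<le> y"
    proof (rule ccontr)
      assume "\<not> low_bit k \<le> y"
      then have "y < low_bit k" "y < t" using lt by auto
      then show False using y nbit_add_low[OF k] lp(2) by auto
    qed
  qed
qed


definition gdiff :: "nat \<Rightarrow> real \<Rightarrow> real" where
  "gdiff i x = dirichlet (2 ^ i) x - dirichlet (2 ^ (i + 1)) x"

definition Ssum :: "nat \<Rightarrow> real \<Rightarrow> real" where
  "Ssum n x = (\<Sum>i<top_bit n. lam n i * gdiff i x)"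

lemma dker_sum: "(\<Sum>i<top_bit n. dker n i x) = walsh n x * Ssum n x"
  unfolding dker_def Ssum_def gdiff_def by (simp add: sum_distrib_left algebra_simps)

lemma lam_facts:
  assumes k: "k = 2^t' + k'" "k' < 2^t'" and tt: "t' < t" and kt: "k < 2^t"
  shows "i < t' \<Longrightarrow> lam (2^t + k) i = lam k i"
    and "lam (2^t + k) t' = 0"
    and "Suc t' \<le> i \<Longrightarrow> i < t \<Longrightarrow> lam (2^t + k) i = 1"
proof -
  have k0: "0 < k" using k by simp
  have tn: "top_bit (2^t + k) = t" using top_bit_eq[OF kt] .
  have tk: "top_bit k = t'" using top_bit_eq[OF k(2)] k(1) by simp
  have ln: "low_bit (2^t + k) = low_bit k" using low_bit_add[OF k0 kt] .
  have lk: "low_bit k \<le> t'" using low_bit_props[of k] k0 tk by simp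
  show "i < t' \<Longrightarrow> lam (2^t + k) i = lam k i"
    unfolding lam_def using tn tk ln nbit_add_low[OF kt, of i] tt by auto
  show "lam (2^t + k) t' = 0"
    unfolding lam_def using nbit_add_low[OF kt tt] nbit_add_top[OF k(2)] k(1) by simp
  assume i: "Suc t' \<le> i" "i < t"
  have "k < 2^Suc t'" using k by simp
  then have "nbit k i = 0" using nbit_high i(1) by blast
  then show "lam (2^t + k) i = 1"
    unfolding lam_def using tn ln lk i nbit_add_low[OF kt i(2)] by auto
qed

lemma lam_pow: "i < t \<Longrightarrow> lam (2^t) i = 0"
  unfolding lam_def using low_bit_pow[of t] by auto

lemma kernel_main:
  "n \<ge> 1 \<Longrightarrow> dirichlet n x = dirichlet (2 ^ (top_bit n + 1)) x - walsh n x * dirichlet (2 ^ low_bit n) x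
     + walsh n x * Ssum n x"
proof (induction n rule: less_induct)
  case (less n)
  obtain t k where n: "n = 2^t + k" "k < 2^t" using decomp less.prems by blast
  have tn: "top_bit n = t" using top_bit_eq[OF n(2)] n(1) by simp
  have Dt1: "dirichlet (2^(t+1)) x = dirichlet (2^t) x + (-1)^digit x t * dirichlet (2^t) x"
    using dirichlet_add_high[of "2^t" t x] by (simp add: mult_2)
  show ?case
  proof (cases "k = 0")
    case True
    have ln: "low_bit n = t" using n True low_bit_pow by simp
    have S0: "Ssum n x = 0" unfolding Ssum_def tn using lam_pow n True by simp
    have w: "walsh n x = (-1)^digit x t" using walsh_add_high[of 0 t x] n True walsh0 by simp
    show ?thesis using S0 w ln tn Dt1 n True by simp
  next
    case False
    then have k0: "0 < k" by simp
    obtain t' k' where kk: "k = 2^t' + k'" "k' < 2^t'" using decomp[of k] k0 by auto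
    have tt: "t' < t"
    proof (rule ccontr)
      assume "\<not> t' < t" then have "(2::nat)^t \<le> 2^t'" by simp
      then show False using n kk by linarith
    qed
    have tk: "top_bit k = t'" using top_bit_eq[OF kk(2)] kk(1) by simp
    have ln: "low_bit n = low_bit k" using low_bit_add[OF k0 n(2)] n(1) by simp
    have IH: "dirichlet k x = dirichlet (2 ^ (t' + 1)) x - walsh k x * dirichlet (2 ^ low_bit k) x
       + walsh k x * Ssum k x" using less.IH[of k] k0 n tk by simp
    have Dn: "dirichlet n x = dirichlet (2^t) x + (-1)^digit x t * dirichlet k x"
      using dirichlet_add_high[of k t x] n by simp
    have wn: "walsh n x = (-1)^digit x t * walsh k x" using walsh_add_high[OF n(2)] n(1) by simp
    have Sn: "Ssum n x = Ssum k x + (dirichlet (2^(t'+1)) x - dirichlet (2^t) x)"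
    proof -
      have "Ssum n x = (\<Sum>i<t. lam n i * gdiff i x)" unfolding Ssum_def tn ..
      also have "\<dots> = (\<Sum>i\<in>{0..<t'}. lam n i * gdiff i x) + lam n t' * gdiff t' x
          + (\<Sum>i\<in>{Suc t'..<t}. lam n i * gdiff i x)"
      proof -
        have "(\<Sum>i\<in>{0..<t}. lam n i * gdiff i x) = (\<Sum>i\<in>{0..<Suc t'}. lam n i * gdiff i x)
          + (\<Sum>i\<in>{Suc t'..<t}. lam n i * gdiff i x)"
          by (rule sum.atLeastLessThan_concat[symmetric]) (use tt in auto)
        then show ?thesis by (simp add: lessThan_atLeast0)
      qed
      also have "(\<Sum>i\<in>{0..<t'}. lam n i * gdiff i x) = Ssum k x"
        unfolding Ssum_def tk lessThan_atLeast0[symmetric] n(1)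
        using lam_facts(1)[OF kk tt n(2)] by simp
      also have "lam n t' * gdiff t' x = 0"
        using lam_facts(2)[OF kk tt n(2)] n(1) by simp
      also have "(\<Sum>i\<in>{Suc t'..<t}. lam n i * gdiff i x) = (\<Sum>i\<in>{Suc t'..<t}. gdiff i x)"
        using lam_facts(3)[OF kk tt n(2)] n(1) by simp
      also have "\<dots> = (\<Sum>i\<in>{Suc t'..<t}. (- dirichlet (2 ^ Suc i) x) - (- dirichlet (2^i) x))"
        unfolding gdiff_def by simp
      also have "\<dots> = dirichlet (2^(t'+1)) x - dirichlet (2^t) x"
        using sum_Suc_diff'[of "Suc t'" t "\<lambda>i. - dirichlet (2^i) x"] tt by simp
      finally show ?thesis by simp
    qed
    have key: "(1 - walsh k x) * (dirichlet (2^(t'+1)) x - dirichlet (2^t) x) = 0"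
    proof (cases "\<forall>j<Suc t'. digit x j = 0")
      case True
      have "k < 2^Suc t'" using kk by simp
      then have "walsh k x = 1" using walsh_one True by blast
      then show ?thesis by simp
    next
      case False
      then have "\<not> (\<forall>j<t. digit x j = 0)" using tt less_trans_Suc by (meson less_trans_Suc not_less_eq)
      then have b: "dirichlet (2^t) x = 0" using dirichlet_pow[of t x] by simp
      have a: "dirichlet (2^(t'+1)) x = 0" using dirichlet_pow[of "t'+1" x] False by simp
      show ?thesis using a b by simp
    qed
    define r where "r = ((-1::real)^digit x t)"
    define wk where "wk = walsh k x"
    define A where "A = dirichlet (2^(t'+1)) x"
    define B where "B = dirichlet (2^t) x"
    define Dm where "Dm = dirichlet (2 ^ low_bit k) x"
    define Sk where "Sk = Ssum k x"
    have "dirichlet n x = B + r * (A - wk * Dm + wk * Sk)"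
      using Dn IH unfolding r_def wk_def A_def B_def Dm_def Sk_def by simp
    also have "\<dots> = (B + r * B) - (r * wk) * Dm + (r * wk) * (Sk + (A - B)) + r * ((1 - wk) * (A - B))"
      by (simp add: algebra_simps)
    also have "r * ((1 - wk) * (A - B)) = 0" using key unfolding wk_def A_def B_def by simp
    finally show ?thesis using Dt1 wn Sn tn ln
      unfolding r_def wk_def A_def B_def Dm_def Sk_def by simp
  qed
qed

theorem part1:
  assumes "n \<ge> 1"
  shows "dirichlet n x = dirichlet (2 ^ (top_bit n + 1)) x - walsh n x * dirichlet (2 ^ low_bit n) x
            + (\<Sum>i<top_bit n. dker n i x)"
  using kernel_main[OF assms] dker_sum by simp


definition xo :: "real \<Rightarrow> real \<Rightarrow> nat \<Rightarrow> nat" where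
  "xo x y j = (if digit x j = digit y j then 0 else 1)"

definition good :: "real \<Rightarrow> real \<Rightarrow> bool" where
  "good y x \<longleftrightarrow> (\<forall>N. \<exists>i\<ge>N. digit x i = digit y i)"

definition T :: "real \<Rightarrow> real \<Rightarrow> real" where
  "T y x = (if dplus x y < 1 then dplus x y else 0)"

lemma xo_le1: "xo x y j \<le> 1" by (simp add: xo_def)

lemma dplus_val: "dplus x y = val (xo x y)"
  unfolding dplus_def val_def xo_def by (intro arg_cong[where f = suminf] ext) auto

lemma val_nonneg: "(\<And>i. c i \<le> 1) \<Longrightarrow> 0 \<le> val c"
  unfolding val_def by (intro suminf_nonneg summable_val) auto

lemma val_le1: "(\<And>i. c i \<le> 1) \<Longrightarrow> val c \<le> 1"
proof -
  assume c: "\<And>i. c i \<le> 1"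
  have "val c \<le> (\<Sum>n. (1/2::real)^Suc n)" unfolding val_def
  proof (rule suminf_le)
    fix n show "real (c n) / 2 ^ (n + 1) \<le> (1/2) ^ Suc n" using c[of n] by (simp add: field_simps power_divide)
  qed (use summable_val c power_half_series summable_def in auto)
  then show ?thesis using sums_unique[OF power_half_series] by simp
qed

lemma dplus_range: "0 \<le> dplus x y" "dplus x y \<le> 1"
  unfolding dplus_val using val_nonneg val_le1 xo_le1 by auto

lemma T_range: "T y x \<in> I01"
  unfolding T_def using dplus_range[of x y] by auto

lemma good_props:
  assumes "good y x"
  shows "dplus x y \<in> I01" "T y x = dplus x y" "digit (T y x) j = xo x y j"
proof -
  have nev: "\<exists>i\<ge>N. xo x y i = 0" for N using assms unfolding good_def xo_def by auto
  show d: "dplus x y \<in> I01" unfolding dplus_val using val_props(2)[OF xo_le1 nev] by blast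
  then show t: "T y x = dplus x y" unfolding T_def by simp
  show "digit (T y x) j = xo x y j" unfolding t dplus_val using val_props(3)[OF xo_le1 nev] by blast
qed

lemma T_invol:
  assumes x: "x \<in> I01" and g: "good y x"
  shows "T y (T y x) = x"
proof -
  have e: "xo (T y x) y j = digit x j" for j
  proof -
    have d: "digit (T y x) j = xo x y j" by (rule good_props(3)[OF g])
    from digit_01[of x j] digit_01[of y j] show ?thesis by (elim disjE) (simp_all add: d xo_def)
  qed
  have e2: "xo (T y x) y = digit x" by (rule ext) (rule e)
  have "dplus (T y x) y = val (digit x)" unfolding dplus_val e2 ..
  also have "\<dots> = x" using val_digit[OF x] .
  finally show ?thesis unfolding T_def[of y "T y x"] using x by simp
qed

lemma bad_countable:
  assumes y: "y \<in> I01"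
  shows "countable {x\<in>I01. \<not> good y x}"
proof -
  define Z where "Z N = {x\<in>I01. \<forall>i\<ge>N. digit x i \<noteq> digit y i}" for N
  have sub: "{x\<in>I01. \<not> good y x} \<subseteq> (\<Union>N. Z N)" unfolding Z_def good_def by auto
  have "countable (Z N)" for N
  proof (rule countableI[of "\<lambda>x. nat \<lfloor>2^N*x\<rfloor>"], rule inj_onI)
    fix a b assume a: "a \<in> Z N" and b: "b \<in> Z N" and e: "nat \<lfloor>2^N*a\<rfloor> = nat \<lfloor>2^N*b\<rfloor>"
    have aI: "a \<in> I01" and bI: "b \<in> I01" using a b unfolding Z_def by auto
    have lo: "\<forall>i<N. digit a i = digit b i" using prefix_iff[OF aI bI] e by blast
    have hi: "digit a i = digit b i" if "i \<ge> N" for i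
      using a b that digit_01[of a i] digit_01[of b i] digit_01[of y i] unfolding Z_def by force
    have "digit a = digit b" using lo hi by (meson ext not_le)
    then show "a = b" using val_digit[OF aI] val_digit[OF bI] by metis
  qed
  then have "countable (\<Union>N. Z N)" by auto
  then show ?thesis using sub countable_subset by blast
qed

abbreviation "L \<equiv> restrict_space lborel I01"

lemma I01_sets: "I01 \<in> sets lborel" by simp

lemma space_L: "space L = I01" by (simp add: space_restrict_space)

lemma AE_good: "y \<in> I01 \<Longrightarrow> AE x in L. good y x"
proof -
  assume y: "y \<in> I01"
  let ?B = "{x\<in>I01. \<not> good y x}"
  have "?B \<in> null_sets lborel" using countable_imp_null_set_lborel[OF bad_countable[OF y]] .
  then have "?B \<in> null_sets L" using null_sets_restrict_space[OF I01_sets] by auto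
  then have "AE x in L. x \<notin> ?B" by (rule AE_not_in)
  then show ?thesis by (rule AE_mp) (auto simp: space_L)
qed

lemma digit_meas[measurable]: "(\<lambda>x. digit x j) \<in> measurable borel (count_space UNIV)"
  unfolding digit_def by measurable

lemma walsh_meas[measurable]: "walsh k \<in> borel_measurable borel"
  unfolding walsh_def by measurable

lemma dirichlet_meas[measurable]: "dirichlet k \<in> borel_measurable borel"
  unfolding dirichlet_def by measurable

lemma dker_meas[measurable]: "dker n i \<in> borel_measurable borel"
  unfolding dker_def by measurable

lemma dplus_meas[measurable]: "(\<lambda>x. dplus x y) \<in> borel_measurable borel"
proof -
  let ?h = "\<lambda>j x. real (xo x y j) / 2 ^ (j + 1)"
  have "(\<lambda>x. val (xo x y)) \<in> borel_measurable borel"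
  proof (rule borel_measurable_LIMSEQ_real[where u = "\<lambda>N x. \<Sum>j<N. ?h j x"])
    fix x show "(\<lambda>N. \<Sum>j<N. ?h j x) \<longlonglongrightarrow> val (xo x y)"
      unfolding val_def by (rule summable_LIMSEQ, rule summable_val, rule xo_le1)
  next
    fix N show "(\<lambda>x. \<Sum>j<N. ?h j x) \<in> borel_measurable borel" unfolding xo_def by measurable
  qed
  then show ?thesis unfolding dplus_val .
qed

lemma T_meas_borel[measurable]: "T y \<in> borel_measurable borel"
  unfolding T_def by measurable

lemma T_meas: "T y \<in> measurable L L"
proof (rule measurable_restrict_space2)
  show "T y \<in> space L \<rightarrow> I01" using T_range[of y] by (simp add: space_L Pi_iff)
  show "T y \<in> measurable L lborel" by (rule measurable_restrict_space1) simp
qed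


definition Gs :: "nat \<Rightarrow> nat \<Rightarrow> real set" where
  "Gs j K = {x\<in>I01. nat \<lfloor>2^j*x\<rfloor> = K}"

lemma Gs_borel[measurable]: "Gs j K \<in> sets borel"
  unfolding Gs_def by measurable

lemma Gs_L: "Gs j K \<in> sets L"
  by (subst sets_restrict_space_iff) (auto simp: Gs_def)

lemma Gs_empty: "\<not> K < 2^j \<Longrightarrow> Gs j K = {}"
  unfolding Gs_def using floor_lt by fastforce

lemma emeasure_Gs: "emeasure L (Gs j K) = (if K < 2^j then ennreal (1/2^j) else 0)"
proof (cases "K < 2^j")
  case True
  have "emeasure L (Gs j K) = emeasure lborel (Gs j K)"
    by (rule emeasure_restrict_space) (auto simp: Gs_def)
  also have "\<dots> = emeasure lborel {real K/2^j..<(real K+1)/2^j}"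
    unfolding Gs_def cyl_interval[OF True] ..
  also have "\<dots> = ennreal ((real K+1)/2^j - real K/2^j)"
    by (rule emeasure_lborel_Ico) (simp add: divide_right_mono)
  also have "(real K+1)/2^j - real K/2^j = 1/2^j" by (simp add: diff_divide_distrib[symmetric])
  finally show ?thesis using True by simp
qed (simp add: Gs_empty)

lemma floor_div: "(x::real) \<ge> 0 \<Longrightarrow> nat \<lfloor>2^(j+d)*x\<rfloor> div 2^d = nat \<lfloor>2^j*x\<rfloor>"
proof (induction d)
  case 0 then show ?case by simp
next
  case (Suc d)
  have "nat \<lfloor>2^(j+Suc d)*x\<rfloor> = 2 * nat \<lfloor>2^(j+d)*x\<rfloor> + digit x (j+d)"
    using floor_step[of x "j+d"] Suc.prems by simp
  then have "nat \<lfloor>2^(j+Suc d)*x\<rfloor> div 2^Suc d = (2 * nat \<lfloor>2^(j+d)*x\<rfloor> + digit x (j+d)) div 2 div 2^d"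
    by (simp add: div_mult2_eq)
  also have "(2 * nat \<lfloor>2^(j+d)*x\<rfloor> + digit x (j+d)) div 2 = nat \<lfloor>2^(j+d)*x\<rfloor>"
    using digit_lt2[of x "j+d"] by simp
  finally show ?case using Suc by simp
qed

definition GE :: "real set set" where
  "GE = range (\<lambda>(j, K). Gs j K)"

lemma Gs_GE: "Gs j K \<in> GE" unfolding GE_def by auto

lemma Gs_inter: "Gs j K \<inter> Gs (j+d) K' = (if K' div 2^d = K then Gs (j+d) K' else {})"
  unfolding Gs_def using floor_div by auto

lemma Int_stable_GE: "Int_stable GE"
  unfolding Int_stable_def
proof (intro ballI)
  fix a b assume "a \<in> GE" "b \<in> GE"
  then obtain j K j' K' where a: "a = Gs j K" and b: "b = Gs j' K'" unfolding GE_def by auto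
  have empty: "{} \<in> GE" using Gs_GE[of 0 1] Gs_empty[of 1 0] by simp
  show "a \<inter> b \<in> GE"
  proof (cases "j \<le> j'")
    case True
    then obtain d where "j' = j + d" using le_Suc_ex by blast
    then show ?thesis using a b Gs_inter[of j K d K'] Gs_GE empty by auto
  next
    case False
    then obtain d where "j = j' + d" using le_Suc_ex[of j' j] by auto
    then show ?thesis using a b Gs_inter[of j' K' d K] Gs_GE empty by (auto simp: Int_commute)
  qed
qed

lemma sets_borel_Iio: "sets (borel::real measure) = sigma_sets UNIV (range lessThan)"
  by (subst borel_Iio) (simp add: sets_measure_of)

lemma lessThan_union: "I01 \<inter> {..<c} = \<Union>((\<lambda>(j, K). Gs j K) ` {(j, K). real K + 1 \<le> c * 2^j})"
proof (intro set_eqI iffI)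
  fix x assume x: "x \<in> I01 \<inter> {..<c}"
  then obtain j where j: "1/2^j < c - x" using pow_small[of "c - x"] by auto
  define K where "K = nat \<lfloor>2^j*x\<rfloor>"
  have x0: "x \<ge> 0" using x by simp
  have "real K \<le> 2^j*x" unfolding K_def using x0 by simp
  moreover have "1 < 2^j * (c - x)" using j by (simp add: field_simps)
  ultimately have "real K + 1 \<le> c * 2^j" by (simp add: algebra_simps)
  moreover have "x \<in> Gs j K" using x unfolding Gs_def K_def by simp
  ultimately show "x \<in> \<Union>((\<lambda>(j, K). Gs j K) ` {(j, K). real K + 1 \<le> c * 2^j})" by auto
next
  fix x assume "x \<in> \<Union>((\<lambda>(j, K). Gs j K) ` {(j, K). real K + 1 \<le> c * 2^j})"
  then obtain j K where jk: "real K + 1 \<le> c * 2^j" "x \<in> Gs j K" by auto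
  then have x: "x \<in> I01" "nat \<lfloor>2^j*x\<rfloor> = K" unfolding Gs_def by auto
  have "2^j*x < real (nat \<lfloor>2^j*x\<rfloor>) + 1" using x(1) real_of_int_floor_add_one_gt[of "2^j*x"] by simp
  then have "2^j*x < real K + 1" using x(2) by simp
  then have h: "2^j*x < c * 2^j" using jk(1) by linarith
  have "x < c"
  proof (rule ccontr)
    assume "\<not> x < c" then have "c * 2^j \<le> x * 2^j" by (intro mult_right_mono) auto
    then show False using h by (simp add: mult.commute)
  qed
  then show "x \<in> I01 \<inter> {..<c}" using x by simp
qed

lemma sets_L_GE: "sets L = sigma_sets I01 GE"
proof
  have "sets L = (\<inter>) I01 ` sets (borel::real measure)" by (simp add: sets_restrict_space)
  also have "\<dots> = (\<inter>) I01 ` sigma_sets UNIV (range lessThan)" by (simp add: sets_borel_Iio)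
  also have "\<dots> = sigma_sets I01 ((\<inter>) I01 ` range lessThan)"
  proof (rule sigma_sets_Int)
    show "I01 \<in> sigma_sets UNIV (range lessThan)" using sets_borel_Iio by (metis atLeastLessThan_borel)
  qed simp
  also have "\<dots> \<subseteq> sigma_sets I01 GE"
  proof (rule sigma_sets_mono, safe)
    fix c :: real
    have "countable {(j::nat, K::nat). real K + 1 \<le> c * 2^j}" by (rule countable_subset[of _ UNIV]) auto
    then have cnt: "countable ((\<lambda>(j, K). Gs j K) ` {(j, K). real K + 1 \<le> c * 2^j})" by blast
    show "I01 \<inter> {..<c} \<in> sigma_sets I01 GE"
      unfolding lessThan_union by (rule sigma_sets_UNION[OF cnt]) (auto intro: Gs_GE)
  qed
  finally show "sets L \<subseteq> sigma_sets I01 GE" .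
next
  have "sigma_sets (space L) GE \<subseteq> sets L"
    by (rule sets.sigma_sets_subset') (use sets.top[of L] in \<open>auto simp: GE_def Gs_L\<close>)
  then show "sigma_sets I01 GE \<subseteq> sets L" by (simp add: space_L)
qed


lemma Gs_prefix: "x0 \<in> I01 \<Longrightarrow> Gs j (nat \<lfloor>2^j*x0\<rfloor>) = {x\<in>I01. \<forall>i<j. digit x i = digit x0 i}"
  unfolding Gs_def using prefix_iff by auto

lemma Gs_00: "Gs 0 0 = I01" unfolding Gs_def using floor0 by auto

lemma preimage_measure:
  assumes y: "y \<in> I01"
  shows "emeasure L (Gs j K) = emeasure L (T y -` Gs j K \<inter> space L)"
proof (cases "K < 2^j")
  case False
  then show ?thesis using Gs_empty by simp
next
  case True
  define u0 where "u0 = real K / 2^j"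
  have "2^j * u0 = real K" unfolding u0_def by simp
  then have u0K: "nat \<lfloor>2^j*u0\<rfloor> = K" by simp
  have "real K < 2^j" using True by (metis of_nat_less_iff of_nat_numeral of_nat_power)
  then have u0I: "u0 \<in> I01" unfolding u0_def by (simp add: field_simps)
  define c where "c i = (if digit u0 i = digit y i then 0 else 1::nat)" for i
  define c' where "c' i = (if i < j then c i else 0)" for i
  have c'1: "c' i \<le> 1" for i unfolding c'_def c_def by auto
  have nev: "\<exists>i\<ge>N. c' i = 0" for N by (rule exI[of _ "max N j"]) (auto simp: c'_def)
  define x0 where "x0 = val c'"
  have x0I: "x0 \<in> I01" unfolding x0_def using val_props(2)[OF c'1 nev] .
  have dx0: "digit x0 i = c i" if "i < j" for i
  proof -
    have "c' i = c i" using that by (simp add: c'_def)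
    then show ?thesis unfolding x0_def using val_props(3)[OF c'1 nev, of i] by simp
  qed
  define C where "C = Gs j (nat \<lfloor>2^j*x0\<rfloor>)"
  have C: "C = {x\<in>I01. \<forall>i<j. digit x i = c i}" unfolding C_def Gs_prefix[OF x0I] using dx0 by auto
  have G: "Gs j K = {x\<in>I01. \<forall>i<j. digit x i = digit u0 i}" using Gs_prefix[OF u0I, of j] u0K by simp
  have "emeasure L (Gs j K) = emeasure L C"
    unfolding C_def emeasure_Gs using True floor_lt[OF x0I, of j] by simp
  also have "\<dots> = emeasure L (T y -` Gs j K \<inter> space L)"
  proof (rule emeasure_eq_AE)
    show "C \<in> sets L" unfolding C_def by (rule Gs_L)
    show "T y -` Gs j K \<inter> space L \<in> sets L" by (rule measurable_sets[OF T_meas Gs_L])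
    show "AE x in L. (x \<in> C) = (x \<in> T y -` Gs j K \<inter> space L)"
      using AE_good[OF y]
    proof (rule AE_mp, intro AE_I2 impI)
      fix x assume x: "x \<in> space L" and g: "good y x"
      have xI: "x \<in> I01" using x space_L by simp
      have per: "xo x y i = digit u0 i \<longleftrightarrow> digit x i = c i" for i
        using digit_01[of x i] digit_01[of y i] digit_01[of u0 i]
        by (elim disjE) (simp_all add: xo_def c_def)
      have "x \<in> T y -` Gs j K \<inter> space L \<longleftrightarrow> (\<forall>i<j. digit (T y x) i = digit u0 i)"
        using x T_range[of y x] unfolding G by auto
      also have "\<dots> \<longleftrightarrow> (\<forall>i<j. digit x i = c i)" using good_props(3)[OF g] per by simp
      also have "\<dots> \<longleftrightarrow> x \<in> C" unfolding C using xI by simp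
      finally show "(x \<in> C) = (x \<in> T y -` Gs j K \<inter> space L)" by simp
    qed
  qed
  finally show ?thesis .
qed

lemma distr_T:
  assumes y: "y \<in> I01"
  shows "distr L L (T y) = L"
proof -
  have "L = distr L L (T y)"
  proof (rule measure_eqI_generator_eq[OF Int_stable_GE, of I01 L "distr L L (T y)" "\<lambda>_. I01"])
    show "GE \<subseteq> Pow I01" unfolding GE_def Gs_def by auto
    fix X assume "X \<in> GE"
    then obtain j K where X: "X = Gs j K" unfolding GE_def by auto
    show "emeasure L X = emeasure (distr L L (T y)) X"
      unfolding X emeasure_distr[OF T_meas Gs_L] by (rule preimage_measure[OF y])
  next
    show "sets L = sigma_sets I01 GE" by (rule sets_L_GE)
    show "sets (distr L L (T y)) = sigma_sets I01 GE" using sets_L_GE by simp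
    show "range (\<lambda>_. I01) \<subseteq> GE" using Gs_GE[of 0 0] Gs_00 by auto
    show "(\<Union>i::nat. I01) = I01" by simp
    show "emeasure L I01 \<noteq> \<infinity>" for i :: nat using emeasure_Gs[of 0 0] Gs_00 by simp
  qed
  then show ?thesis by simp
qed


lemma set_int_L: "set_lebesgue_integral lborel I01 (h::real\<Rightarrow>real) = integral\<^sup>L L h"
  unfolding set_lebesgue_integral_def by (rule integral_restrict_space[symmetric]) simp

lemma dyad_sub: "dyad_int m y \<subseteq> I01" unfolding dyad_int_def by auto

lemma dyad_borel: "y \<in> I01 \<Longrightarrow> dyad_int m y \<in> sets borel"
  using dyad_int_eq[of y m] Gs_borel[of m "nat \<lfloor>2^m*y\<rfloor>"] unfolding Gs_def by simp

lemma dyad_L: "y \<in> I01 \<Longrightarrow> dyad_int m y \<in> sets L"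
  by (subst sets_restrict_space_iff) (auto simp: dyad_sub dyad_borel)

lemma set_int_dyad: "set_lebesgue_integral lborel (dyad_int m y) (h::real\<Rightarrow>real) = integral\<^sup>L L (\<lambda>x. indicator (dyad_int m y) x * h x)"
proof -
  have "integral\<^sup>L L (\<lambda>x. indicator (dyad_int m y) x * h x)
      = integral\<^sup>L lborel (\<lambda>x. indicator I01 x *\<^sub>R (indicator (dyad_int m y) x * h x))"
    by (rule integral_restrict_space) simp
  also have "\<dots> = integral\<^sup>L lborel (\<lambda>x. indicator (dyad_int m y) x *\<^sub>R h x)"
    using dyad_sub[of m y] by (intro Bochner_Integration.integral_cong) (auto simp: indicator_def)
  finally show ?thesis unfolding set_lebesgue_integral_def by simp
qed

lemma walsh_abs: "\<bar>walsh k x\<bar> = 1"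
  unfolding walsh_def by (simp add: abs_prod power_abs)

lemma dirichlet_abs: "\<bar>dirichlet n x\<bar> \<le> real n"
proof -
  have "\<bar>dirichlet n x\<bar> \<le> (\<Sum>k<n. \<bar>walsh k x\<bar>)" unfolding dirichlet_def by (rule sum_abs)
  also have "\<dots> = real n" by (simp add: walsh_abs)
  finally show ?thesis .
qed

lemma dker_abs: "\<bar>dker n i x\<bar> \<le> 3 * 2^i"
proof -
  have l: "\<bar>lam n i\<bar> \<le> 1" by (simp add: lam_def)
  have "\<bar>dirichlet (2^i) x - dirichlet (2^(i+1)) x\<bar> \<le> 2^i + 2^(i+1)"
    using dirichlet_abs[of "2^i" x] dirichlet_abs[of "2^(i+1)" x] by simp
  then have "\<bar>lam n i\<bar> * (\<bar>walsh n x\<bar> * \<bar>dirichlet (2^i) x - dirichlet (2^(i+1)) x\<bar>) \<le> 1 * (1 * (2^i + 2^(i+1)))"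
    using l walsh_abs[of n x] by (intro mult_mono) auto
  then show ?thesis unfolding dker_def by (simp add: abs_mult)
qed

lemma integrable_bmult:
  fixes f g :: "real \<Rightarrow> real"
  assumes f: "integrable M f" and g: "g \<in> borel_measurable M" and b: "\<And>x. \<bar>g x\<bar> \<le> C"
  shows "integrable M (\<lambda>x. f x * g x)"
proof (rule Bochner_Integration.integrable_bound)
  show "integrable M (\<lambda>x. C * f x)" using f by simp
  show "(\<lambda>x. f x * g x) \<in> borel_measurable M" using f g by measurable
  show "AE x in M. norm (f x * g x) \<le> norm (C * f x)"
  proof (intro AE_I2)
    fix x
    have "\<bar>f x\<bar> * \<bar>g x\<bar> \<le> \<bar>f x\<bar> * C" using b[of x] by (intro mult_left_mono) auto
    moreover have "C \<ge> 0" using b[of x] by linarith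
    ultimately show "norm (f x * g x) \<le> norm (C * f x)" by (simp add: abs_mult mult.commute)
  qed
qed

lemma walsh_T: "good y x \<Longrightarrow> walsh k (T y x) = walsh k x * walsh k y"
proof -
  assume g: "good y x"
  have "(-1::real) ^ (digit (T y x) j * nbit k j) = (-1) ^ (digit x j * nbit k j) * (-1) ^ (digit y j * nbit k j)" for j
  proof -
    have d: "digit (T y x) j = xo x y j" by (rule good_props(3)[OF g])
    from digit_01[of x j] digit_01[of y j] show ?thesis
      by (elim disjE) (simp_all add: d xo_def power_mult[symmetric] power_add[symmetric])
  qed
  then show ?thesis unfolding walsh_def by (simp add: prod.distrib)
qed

lemma dpow_T:
  assumes x: "x \<in> I01" and g: "good y x"
  shows "dirichlet (2^a) (T y x) = 2^a * indicator (dyad_int a y) x"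
proof -
  have "(\<forall>j<a. digit (T y x) j = 0) \<longleftrightarrow> x \<in> dyad_int a y"
    unfolding dyad_int_def using x good_props(3)[OF g] by (auto simp: xo_def split: if_splits)
  then show ?thesis using dirichlet_pow[of a "T y x"] by (simp add: indicator_def)
qed

context
  fixes f :: "real \<Rightarrow> real" and y :: real
  assumes fI: "set_integrable lborel I01 f" and y: "y \<in> I01"
begin

lemma intL: "integrable L f"
  using fI unfolding set_integrable_def by (subst integrable_restrict_space) auto

lemma fmeas[measurable]: "f \<in> borel_measurable L"
  using intL by (rule borel_measurable_integrable)

lemma Tm[measurable]: "T y \<in> measurable L L" by (rule T_meas)

lemma walsh_L[measurable]: "walsh k \<in> borel_measurable L"
  by (rule measurable_restrict_space1) simp
lemma dirichlet_L[measurable]: "dirichlet k \<in> borel_measurable L"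
  by (rule measurable_restrict_space1) simp
lemma dker_L[measurable]: "dker n i \<in> borel_measurable L"
  by (rule measurable_restrict_space1) simp
lemma dplus_L[measurable]: "(\<lambda>x. dplus x y) \<in> borel_measurable L"
  by (rule measurable_restrict_space1) simp
lemma dyad_Lm[measurable]: "dyad_int m y \<in> sets L"
  by (rule dyad_L[OF y])

lemma partial_sum_L: "partial_sum n f y = integral\<^sup>L L (\<lambda>x. f x * dirichlet n (T y x))"
proof -
  have "partial_sum n f y = (\<Sum>k<n. integral\<^sup>L L (\<lambda>x. f x * walsh k x * walsh k y))"
    unfolding partial_sum_def walsh_coeff_def set_int_L by simp
  also have "\<dots> = integral\<^sup>L L (\<lambda>x. \<Sum>k<n. f x * walsh k x * walsh k y)"
  proof (rule Bochner_Integration.integral_sum[symmetric])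
    fix k
    have "integrable L (\<lambda>x. f x * walsh k x)"
      by (rule integrable_bmult[OF intL walsh_L, where C=1]) (simp add: walsh_abs)
    then show "integrable L (\<lambda>x. f x * walsh k x * walsh k y)" by simp
  qed
  also have "\<dots> = integral\<^sup>L L (\<lambda>x. f x * dirichlet n (T y x))"
  proof (rule integral_cong_AE)
    show "(\<lambda>x. \<Sum>k<n. f x * walsh k x * walsh k y) \<in> borel_measurable L" by measurable
    show "(\<lambda>x. f x * dirichlet n (T y x)) \<in> borel_measurable L" by measurable
    show "AE x in L. (\<Sum>k<n. f x * walsh k x * walsh k y) = f x * dirichlet n (T y x)"
      using AE_good[OF y]
      by (rule AE_mp) (auto simp: dirichlet_def walsh_T sum_distrib_left mult.assoc)
  qed
  finally show ?thesis .
qed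

lemma dconv_L:
  assumes g[measurable]: "g \<in> borel_measurable L"
  shows "dconv f g y = integral\<^sup>L L (\<lambda>x. f x * g (T y x))"
proof -
  have e: "(\<lambda>x. f (dplus x y) * g x) = (\<lambda>x. (if dplus x y < 1 then f (T y x) else f 1) * g x)"
  proof
    fix x
    show "f (dplus x y) * g x = (if dplus x y < 1 then f (T y x) else f 1) * g x"
      using dplus_range(2)[of x y] by (auto simp: T_def)
  qed
  have "dconv f g y = integral\<^sup>L L (\<lambda>x. f (dplus x y) * g x)" unfolding dconv_def set_int_L ..
  also have "\<dots> = integral\<^sup>L L (\<lambda>x. f (T y x) * g x)"
  proof (rule integral_cong_AE)
    show "(\<lambda>x. f (dplus x y) * g x) \<in> borel_measurable L" unfolding e by measurable
    show "(\<lambda>x. f (T y x) * g x) \<in> borel_measurable L" by measurable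
    show "AE x in L. f (dplus x y) * g x = f (T y x) * g x"
      using AE_good[OF y] by (rule AE_mp) (auto simp: good_props(2))
  qed
  also have "\<dots> = integral\<^sup>L L (\<lambda>x. f (T y x) * g (T y (T y x)))"
  proof (rule integral_cong_AE)
    show "(\<lambda>x. f (T y x) * g x) \<in> borel_measurable L" by measurable
    show "(\<lambda>x. f (T y x) * g (T y (T y x))) \<in> borel_measurable L" by measurable
    show "AE x in L. f (T y x) * g x = f (T y x) * g (T y (T y x))"
      using AE_good[OF y] by (rule AE_mp) (auto simp: T_invol space_L)
  qed
  also have "\<dots> = integral\<^sup>L (distr L L (T y)) (\<lambda>x. f x * g (T y x))"
    by (rule integral_distr[symmetric]) (measurable)
  also have "\<dots> = integral\<^sup>L L (\<lambda>x. f x * g (T y x))" unfolding distr_T[OF y] ..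
  finally show ?thesis .
qed

lemma main_y:
  assumes n: "n \<ge> 1"
  shows "partial_sum n f y =
                 cond_exp_dyad (top_bit n + 1) f y
                 - walsh n y * cond_exp_dyad (low_bit n) (\<lambda>x. f x * walsh n x) y
                 + (\<Sum>i<top_bit n. dconv f (dker n i) y)"
proof -
  define M where "M = top_bit n + 1"
  define m where "m = low_bit n"
  define t where "t = top_bit n"
  let ?IM = "indicator (dyad_int M y) :: real \<Rightarrow> real"
  let ?Im = "indicator (dyad_int m y) :: real \<Rightarrow> real"
  define H where "H x = 2^M * (?IM x * f x) - walsh n y * (2^m * (?Im x * (f x * walsh n x)))
      + (\<Sum>i<t. f x * dker n i (T y x))" for x
  have i1: "integrable L (\<lambda>x. ?IM x * f x)"
    using integrable_bmult[OF intL, of ?IM 1] by (simp add: mult.commute)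
  have i2: "integrable L (\<lambda>x. ?Im x * (f x * walsh n x))"
  proof -
    have "integrable L (\<lambda>x. f x * (?Im x * walsh n x))"
      by (rule integrable_bmult[OF intL, of _ 1]) (auto simp: abs_mult walsh_abs)
    then show ?thesis by (simp add: algebra_simps)
  qed
  have i3: "integrable L (\<lambda>x. f x * dker n i (T y x))" for i
    by (rule integrable_bmult[OF intL, of _ "3 * 2^i"]) (auto simp: dker_abs)
  have "partial_sum n f y = integral\<^sup>L L (\<lambda>x. f x * dirichlet n (T y x))" by (rule partial_sum_L)
  also have "\<dots> = integral\<^sup>L L H"
  proof (rule integral_cong_AE)
    show "(\<lambda>x. f x * dirichlet n (T y x)) \<in> borel_measurable L" by measurable
    show "H \<in> borel_measurable L" unfolding H_def by measurable
    show "AE x in L. f x * dirichlet n (T y x) = H x"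
      using AE_good[OF y]
    proof (rule AE_mp, intro AE_I2 impI)
      fix x assume x: "x \<in> space L" and g: "good y x"
      have xI: "x \<in> I01" using x space_L by simp
      have "dirichlet n (T y x) = dirichlet (2 ^ M) (T y x) - walsh n (T y x) * dirichlet (2 ^ m) (T y x)
            + (\<Sum>i<t. dker n i (T y x))" using part1[OF n] unfolding M_def m_def t_def .
      also have "\<dots> = 2^M * ?IM x - walsh n x * walsh n y * (2^m * ?Im x) + (\<Sum>i<t. dker n i (T y x))"
        using dpow_T[OF xI g] walsh_T[OF g] by simp
      finally have eq: "dirichlet n (T y x) = 2^M * ?IM x - walsh n x * walsh n y * (2^m * ?Im x) + (\<Sum>i<t. dker n i (T y x))" .
      show "f x * dirichlet n (T y x) = H x"
        unfolding H_def eq by (simp add: algebra_simps sum_distrib_left)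
    qed
  qed
  also have "\<dots> = 2^M * integral\<^sup>L L (\<lambda>x. ?IM x * f x)
      - walsh n y * (2^m * integral\<^sup>L L (\<lambda>x. ?Im x * (f x * walsh n x)))
      + (\<Sum>i<t. integral\<^sup>L L (\<lambda>x. f x * dker n i (T y x)))"
    unfolding H_def using i1 i2 i3 by (simp add: Bochner_Integration.integral_sum)
  also have "\<dots> = cond_exp_dyad M f y - walsh n y * cond_exp_dyad m (\<lambda>x. f x * walsh n x) y
      + (\<Sum>i<t. dconv f (dker n i) y)"
    unfolding cond_exp_dyad_def set_int_dyad using dconv_L[OF dker_L] by simp
  finally show ?thesis unfolding M_def m_def t_def .
qed

end


theorem proposition2p1:
  fixes n :: nat
  assumes "n \<ge> 1"
  shows "(\<forall>x\<in>{0..<1}. dirichlet n x =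
            dirichlet (2 ^ (top_bit n + 1)) x - walsh n x * dirichlet (2 ^ low_bit n) x
            + (\<Sum>i<top_bit n. dker n i x))
       \<and> (\<forall>f :: real \<Rightarrow> real. set_integrable lborel {0..<1} f \<longrightarrow>
            (AE y in lborel. y \<in> {0..<1} \<longrightarrow>
               partial_sum n f y =
                 cond_exp_dyad (top_bit n + 1) f y
                 - walsh n y * cond_exp_dyad (low_bit n) (\<lambda>x. f x * walsh n x) y
                 + (\<Sum>i<top_bit n. dconv f (dker n i) y)))"
proof (intro conjI ballI allI impI)
  fix x :: real
  show "dirichlet n x =
            dirichlet (2 ^ (top_bit n + 1)) x - walsh n x * dirichlet (2 ^ low_bit n) x
            + (\<Sum>i<top_bit n. dker n i x)" by (rule part1[OF assms])
next
  fix f :: "real \<Rightarrow> real"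
  assume fI: "set_integrable lborel {0..<1} f"
  show "AE y in lborel. y \<in> {0..<1} \<longrightarrow>
               partial_sum n f y =
                 cond_exp_dyad (top_bit n + 1) f y
                 - walsh n y * cond_exp_dyad (low_bit n) (\<lambda>x. f x * walsh n x) y
                 + (\<Sum>i<top_bit n. dconv f (dker n i) y)"
    using main_y[OF fI _ assms] by (intro AE_I2) auto
qed

end
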